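(* Let $\mathcal D$ be a distribution of $(x,y)\in\mathbb R^d\times\{-1,+1\}$ with $x$ having finite second moments, let $\lambda>0$, and let $w^*$ be a minimizer of $\mathcal L(w)=\mathbb E_{(x,y)\sim\mathcal D}[\max(0,1-yw^\top x)]+\frac{\lambda}{2}\|w\|_2^2$. Suppose the coordinates of $x$ are mutually independent conditionally on $y$. If a coordinate $i$ satisfies $\mathbb E[x_i\mid y=-1]=0=\mathbb E[x_i\mid y=1]$, then $w_i^*=0$. *)

theory Defs
  imports "HOL-Probability.Probability"
begin

definition svm_loss :: "((real^'d) \<times> real) measure \<Rightarrow> real \<Rightarrow> real^'d \<Rightarrow> real" where
  "svm_loss D lam w =
     (\<integral>p. max 0 (1 - snd p * (w \<bullet> fst p)) \<partial>D) + lam / 2 * (norm w)^2"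

text \<open>Conditional distribution of (x,y) given y = c (meaningful when P(y=c) > 0).\<close>
definition cond_dist :: "((real^'d) \<times> real) measure \<Rightarrow> real \<Rightarrow> ((real^'d) \<times> real) measure" where
  "cond_dist D c = uniform_measure D {p \<in> space D. snd p = c}"

end

theory Submission
  imports Defs
begin
lemma vec_nth_borel[measurable]: "(\<lambda>x::real^'d. x $ i) \<in> borel_measurable borel"
  by (intro borel_measurable_continuous_onI continuous_intros)

lemma cond_integral:
  fixes D :: "'a measure" and f :: "'a \<Rightarrow> real"
  assumes "prob_space D" "A \<in> sets D" "measure D A > 0" "f \<in> borel_measurable D" "integrable D f"
  shows "integrable (uniform_measure D A) f"
    "(\<integral>x. f x \<partial>uniform_measure D A) = (\<integral>x. indicator A x * f x \<partial>D) / measure D A"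
proof -
  interpret prob_space D by fact
  have eq: "uniform_measure D A = density D (\<lambda>x. ennreal (indicator A x / measure D A))"
    unfolding uniform_measure_def
    by (intro arg_cong[where f="density D"] ext)
       (use assms in \<open>auto simp: emeasure_eq_measure divide_ennreal ennreal_1[symmetric] simp del: ennreal_1 split: split_indicator\<close>)
  have gm: "(\<lambda>x. indicator A x / measure D A) \<in> borel_measurable D" using assms by measurable
  have fun_eq: "(\<lambda>x. (indicator A x / measure D A) *\<^sub>R f x) = (\<lambda>x. (1 / measure D A) * (indicator A x * f x))"
    by auto
  have "integrable D (\<lambda>x. indicator A x *\<^sub>R f x)"
    by (rule integrable_mult_indicator) (use assms in auto)
  then have int: "integrable D (\<lambda>x. (indicator A x / measure D A) *\<^sub>R f x)"
    unfolding fun_eq by simp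
  show "integrable (uniform_measure D A) f"
    unfolding eq using integrable_density[OF assms(4) gm] int by simp
  show "(\<integral>x. f x \<partial>uniform_measure D A) = (\<integral>x. indicator A x * f x \<partial>D) / measure D A"
    unfolding eq using integral_density[OF assms(4) gm] fun_eq by simp
qed

lemma indep_zero:
  fixes M :: "((real^'d) \<times> real) measure" and v :: "real^'d"
  assumes "prob_space M" "sets M = sets (borel \<Otimes>\<^sub>M borel)"
    "prob_space.indep_vars M (\<lambda>_. borel) (\<lambda>j p. fst p $ j) UNIV"
    "integrable M (\<lambda>p. fst p $ i)" "v $ i = 0"
  shows "(\<integral>p. fst p $ i * (if c * (v \<bullet> fst p) < 1 then 1 else 0) \<partial>M)
      = (\<integral>p. fst p $ i \<partial>M) * (\<integral>p. (if c * (v \<bullet> fst p) < 1 then 1 else 0) \<partial>M)"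
proof -
  interpret prob_space M by fact
  note [measurable_cong] = assms(2)
  define K where "K = (\<lambda>b::bool. if b then {i} else UNIV - {i})"
  have ind: "indep_vars (\<lambda>b. PiM (K b) (\<lambda>_. borel)) (\<lambda>b \<omega>. restrict (\<lambda>j. fst \<omega> $ j) (K b)) UNIV"
    by (rule indep_vars_restrict[OF assms(3)]) (auto simp: K_def disjoint_family_on_def)
  have e1: "(\<lambda>b. PiM (K b) (\<lambda>_. borel)) = case_bool (PiM (K True) (\<lambda>_. borel)) (PiM (K False) (\<lambda>_. (borel::real measure)))"
    by (rule ext) (simp split: bool.split)
  have e2: "(\<lambda>b \<omega>. restrict (\<lambda>j. fst \<omega> $ j) (K b)) = case_bool (\<lambda>\<omega>. restrict (\<lambda>j. fst \<omega> $ j) (K True)) (\<lambda>\<omega>. restrict (\<lambda>j. fst \<omega> $ j) (K False))"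
    by (rule ext) (simp split: bool.split)
  have iv: "indep_var (PiM (K True) (\<lambda>_. borel)) (\<lambda>\<omega>. restrict (\<lambda>j. fst \<omega> $ j) (K True))
     (PiM (K False) (\<lambda>_. borel)) (\<lambda>\<omega>. restrict (\<lambda>j. fst \<omega> $ j) (K False))"
    unfolding indep_var_def using ind unfolding e1 e2 .
  define Y1 where "Y1 = (\<lambda>f::'d \<Rightarrow> real. f i)"
  define Y2 where "Y2 = (\<lambda>f::'d \<Rightarrow> real. if c * (\<Sum>j\<in>UNIV-{i}. v$j * f j) < 1 then 1 else (0::real))"
  have m1: "Y1 \<in> borel_measurable (PiM (K True) (\<lambda>_. borel))" unfolding Y1_def K_def by measurable
  have m2: "Y2 \<in> borel_measurable (PiM (K False) (\<lambda>_. borel))" unfolding Y2_def K_def by measurable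
  note iv2 = indep_var_compose[OF iv m1 m2]
  have inner: "v \<bullet> x = (\<Sum>j\<in>UNIV-{i}. v$j * x$j)" for x :: "real^'d"
    unfolding inner_vec_def using assms(5) by (simp add: sum.remove[of UNIV i])
  have c1: "Y1 \<circ> (\<lambda>\<omega>. restrict (\<lambda>j. fst \<omega> $ j) (K True)) = (\<lambda>p. fst p $ i)"
    by (auto simp: Y1_def K_def)
  have c2: "Y2 \<circ> (\<lambda>\<omega>. restrict (\<lambda>j. fst \<omega> $ j) (K False)) = (\<lambda>p. if c * (v \<bullet> fst p) < 1 then 1 else 0)"
    by (auto simp: Y2_def K_def inner intro!: ext)
  have iv3: "indep_var borel (\<lambda>p. fst p $ i) borel (\<lambda>p. if c * (v \<bullet> fst p) < 1 then 1 else (0::real))"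
    using iv2 unfolding c1 c2 .
  have int2: "integrable M (\<lambda>p. if c * (v \<bullet> fst p) < 1 then 1 else (0::real))"
    by (rule integrable_const_bound[where B=1]) auto
  show ?thesis by (rule indep_var_lebesgue_integral[OF iv3 assms(4) int2])
qed

theorem mainTheorem2:
  fixes D :: "((real^'d) \<times> real) measure" and lam :: real
    and wstar :: "real^'d" and i :: 'd
  assumes "prob_space D"
    and "sets D = sets borel"
    and "AE p in D. snd p \<in> {-1, 1}"
    and "integrable D (\<lambda>p. (norm (fst p))^2)"
    and "lam > 0"
    and "\<forall>w. svm_loss D lam wstar \<le> svm_loss D lam w"
    and "\<forall>c\<in>{-1, 1::real}. measure D {p \<in> space D. snd p = c} > 0 \<longrightarrow>
           prob_space.indep_vars (cond_dist D c) (\<lambda>_. borel) (\<lambda>j p. fst p $ j) UNIV"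
    and "\<forall>c\<in>{-1, 1::real}. measure D {p \<in> space D. snd p = c} > 0 \<longrightarrow>
           (\<integral>p. fst p $ i \<partial>(cond_dist D c)) = 0"
  shows "wstar $ i = 0"
proof -
  interpret prob_space D by fact
  have sD: "sets D = sets (borel \<Otimes>\<^sub>M borel)" unfolding borel_prod by (rule assms(2))
  note [measurable_cong] = sD
  define a where "a = wstar $ i"
  define w' where "w' = (\<chi> j. if j = i then 0 else wstar $ j)"
  have w'i: "w' $ i = 0" by (simp add: w'_def)
  have dec: "wstar \<bullet> x = w' \<bullet> x + a * x $ i" for x :: "real^'d"
    unfolding inner_vec_def
    by (simp add: sum.remove[of UNIV i] w'_def a_def)
  have nrm: "(norm wstar)^2 = (norm w')^2 + a^2"
    unfolding power2_norm_eq_inner inner_vec_def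
    by (simp add: sum.remove[of UNIV i] w'_def a_def power2_eq_square)
  define N where "N = (\<lambda>p::(real^'d)\<times>real. 1 + (norm (fst p))^2)"
  have intN: "integrable D N" unfolding N_def using assms(4) by simp
  have Nge: "norm (fst p) \<le> N p" for p
  proof -
    have "0 \<le> (norm (fst p) - 1)^2" by simp
    then have "2 * norm (fst p) \<le> 1 + (norm (fst p))^2" by (simp add: power2_eq_square algebra_simps)
    then have "norm (fst p) \<le> 1 + (norm (fst p))^2" using norm_ge_zero[of "fst p"] by linarith
    then show ?thesis by (simp add: N_def)
  qed
  have Npos: "0 \<le> N p" for p by (simp add: N_def)
  have intX: "integrable D (\<lambda>p. fst p $ i)"
  proof (rule Bochner_Integration.integrable_bound[OF intN])
    show "(\<lambda>p. fst p $ i) \<in> borel_measurable D" by measurable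
    show "AE p in D. norm (fst p $ i) \<le> norm (N p)"
    proof (rule AE_I2)
      fix p :: "(real^'d) \<times> real"
      have "norm (fst p $ i) \<le> norm (fst p)" using component_le_norm_cart[of "fst p" i] by simp
      also have "\<dots> \<le> N p" by (rule Nge)
      also have "\<dots> = norm (N p)" using Npos[of p] by simp
      finally show "norm (fst p $ i) \<le> norm (N p)" .
    qed
  qed
  define H where "H = (\<lambda>w p. max 0 (1 - snd p * (w \<bullet> fst (p::(real^'d)\<times>real))))"
  have intH: "integrable D (H w)" for w
  proof (rule Bochner_Integration.integrable_bound)
    show "integrable D (\<lambda>p. 1 + norm w * N p)" using intN by simp
    show "H w \<in> borel_measurable D" unfolding H_def by measurable
    show "AE p in D. norm (H w p) \<le> norm (1 + norm w * N p)"
      using assms(3)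
    proof eventually_elim
      case (elim p)
      have "\<bar>w \<bullet> fst p\<bar> \<le> norm w * norm (fst p)" by (rule Cauchy_Schwarz_ineq2)
      also have "\<dots> \<le> norm w * N p" by (rule mult_left_mono[OF Nge]) simp
      finally have "\<bar>w \<bullet> fst p\<bar> \<le> norm w * N p" .
      moreover have "0 \<le> norm w * N p" using Npos by simp
      ultimately show ?case using elim unfolding H_def by auto
    qed
  qed
  define k where "k = (\<lambda>p::(real^'d)\<times>real. snd p * fst p $ i * (if snd p * (w' \<bullet> fst p) < 1 then 1 else 0))"
  define h where "h = (\<lambda>c (p::(real^'d)\<times>real). fst p $ i * (if c * (w' \<bullet> fst p) < 1 then 1 else (0::real)))"
  define A where "A = (\<lambda>c. {p \<in> space D. snd p = c})"
  have A_sets: "A c \<in> sets D" for c unfolding A_def by measurable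
  have hm: "h c \<in> borel_measurable D" for c unfolding h_def by measurable
  have inth: "integrable D (h c)" for c
  proof (rule Bochner_Integration.integrable_bound[OF intX hm])
    show "AE p in D. norm (h c p) \<le> norm (fst p $ i)" by (auto simp: h_def)
  qed
  have intAh: "integrable D (\<lambda>p. indicator (A c) p * h c p)" for c
    using integrable_mult_indicator[OF A_sets inth, of c c] by simp
  have Z: "(\<integral>p. indicator (A c) p * h c p \<partial>D) = 0" if c: "c \<in> {-1, 1}" for c
  proof (cases "measure D (A c) > 0")
    case False
    then have "measure D (A c) = 0" using measure_nonneg[of D "A c"] by linarith
    then have "A c \<in> null_sets D" using A_sets by (simp add: emeasure_eq_measure null_sets_def)
    then have "AE p in D. p \<notin> A c" by (rule AE_not_in)
    then have "AE p in D. indicator (A c) p * h c p = 0" by eventually_elim simp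
    then show ?thesis by (simp add: integral_eq_zero_AE)
  next
    case True
    have cd: "cond_dist D c = uniform_measure D (A c)" unfolding cond_dist_def A_def ..
    have ps: "prob_space (cond_dist D c)" unfolding cd
      by (rule prob_space_uniform_measure) (use True A_sets in \<open>auto simp: emeasure_eq_measure\<close>)
    have ci: "integrable (cond_dist D c) (\<lambda>p. fst p $ i)"
      unfolding cd by (rule cond_integral(1)[OF assms(1) A_sets True _ intX]) measurable
    have indep: "prob_space.indep_vars (cond_dist D c) (\<lambda>_. borel) (\<lambda>j p. fst p $ j) UNIV"
      using assms(7) c True by (auto simp: A_def)
    have mean0: "(\<integral>p. fst p $ i \<partial>(cond_dist D c)) = 0"
      using assms(8) c True by (auto simp: A_def)
    have sc: "sets (cond_dist D c) = sets (borel \<Otimes>\<^sub>M borel)" unfolding cd using sD by simp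
    have "(\<integral>p. h c p \<partial>(cond_dist D c)) = 0"
      unfolding h_def indep_zero[OF ps sc indep ci w'i] mean0 by simp
    moreover have "(\<integral>p. h c p \<partial>(cond_dist D c)) = (\<integral>p. indicator (A c) p * h c p \<partial>D) / measure D (A c)"
      unfolding cd by (rule cond_integral(2)[OF assms(1) A_sets True hm inth])
    ultimately show ?thesis using True by simp
  qed
  have km: "k \<in> borel_measurable D" unfolding k_def by measurable
  have intk: "integrable D k"
  proof (rule Bochner_Integration.integrable_bound[OF intX km])
    show "AE p in D. norm (k p) \<le> norm (fst p $ i)"
      using assms(3) by eventually_elim (auto simp: k_def)
  qed
  have "AE p in D. k p = indicator (A 1) p * h 1 p - indicator (A (-1)) p * h (-1) p"
    using assms(3) AE_space by eventually_elim (auto simp: k_def h_def A_def split: split_indicator)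
  then have "integral\<^sup>L D k = (\<integral>p. indicator (A 1) p * h 1 p - indicator (A (-1)) p * h (-1) p \<partial>D)"
    by (intro integral_cong_AE km) (use hm A_sets in measurable)
  also have "\<dots> = 0"
    using Z[of 1] Z[of "-1"] intAh[of 1] intAh[of "-1"] by simp
  finally have k0: "integral\<^sup>L D k = 0" .
  have pt: "H w' p - a * k p \<le> H wstar p" for p
    unfolding H_def k_def dec by (auto simp: algebra_simps)
  have "integral\<^sup>L D (H w') = (\<integral>p. H w' p - a * k p \<partial>D)"
    using intH[of w'] intk k0 by simp
  also have "\<dots> \<le> integral\<^sup>L D (H wstar)"
    by (rule integral_mono) (use intH intk pt in auto)
  finally have hi: "integral\<^sup>L D (H w') \<le> integral\<^sup>L D (H wstar)" .
  have "svm_loss D lam wstar \<le> svm_loss D lam w'" using assms(6) by blast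
  then have "integral\<^sup>L D (H wstar) + lam / 2 * ((norm w')^2 + a^2) \<le> integral\<^sup>L D (H w') + lam / 2 * (norm w')^2"
    unfolding svm_loss_def H_def nrm by simp
  with hi have "lam / 2 * a^2 \<le> 0" by (simp add: algebra_simps)
  with assms(5) have "a^2 \<le> 0" by (simp add: mult_le_0_iff)
  then show ?thesis unfolding a_def by simp
qed
end
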